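(* Let $(M,\Delta,S,\varepsilon)$ be a weak Kac algebra with target Cartan subalgebra $N_t$. For $x\in N_t$ let $L_x:N_t\to N_t$ be the linear operator $L_x(n)=xn$. Then $\varepsilon(x)=\mathrm{Tr}\,L_x$ for all $x\in N_t$, where $\mathrm{Tr}$ is the usual trace of a linear operator on the finite-dimensional space $N_t$.
   Context: All algebras are finite-dimensional over $\mathbb{C}$; $\varsigma$ denotes the flip and $\mu(x\otimes y)=xy$. A weak Kac algebra is a quadruple $(M,\Delta,S,\varepsilon)$ where $M$ is a finite-dimensional $C^*$-algebra; $\Delta:M\to M\otimes M$ is an injective, not necessarily unital, $*$-homomorphism with $(\Delta\otimes\mathrm{id})\Delta=(\mathrm{id}\otimes\Delta)\Delta$; $S:M\to M$ is a linear, unital, antimultiplicative, $*$-preserving bijection with $S^2=\mathrm{id}$ and $(S\otimes S)\circ\Delta=\varsigma\circ\Delta\circ S$; and $\varepsilon:M\to\mathbb{C}$ is linear with $(\varepsilon\otimes\mathrm{id})\Delta=(\mathrm{id}\otimes\varepsilon)\Delta=\mathrm{id}$, $\varepsilon\circ S=\varepsilon$, $\varepsilon(x^* )=\overline{\varepsilon(x)}$, $(\varepsilon\otimes\varepsilon)((x\otimes1)e(1\otimes y))=\varepsilon(xy)$ for all $x,y$, where $e:=\Delta(1)$, and $(\varepsilon_s\otimes\mathrm{id})\Delta(x)=(1\otimes x)e$ for all $x$, where $\varepsilon_s:=\mu(S\otimes\mathrm{id})\Delta$. The target Cartan subalgebra is $N_t=\{x\in M:\Delta(x)=e(x\otimes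 1)=(x\otimes1)e\}$. *)

theory Defs
  imports Complex_Main
begin

text \<open>Concrete model: a finite-dimensional complex vector space M is represented as
  the coordinate space 'i \<Rightarrow> complex for a finite index type 'i (a chosen linear basis);
  M \<otimes> M is ('i \<times> 'i) \<Rightarrow> complex, M \<otimes> M \<otimes> M is ('i \<times> 'i \<times> 'i) \<Rightarrow> complex,
  with x \<otimes> y = (\<lambda>(a,b). x a * y b).  Maps out of tensor products are the linear
  extensions, written via the standard basis.\<close>

definition vadd :: "('a \<Rightarrow> complex) \<Rightarrow> ('a \<Rightarrow> complex) \<Rightarrow> ('a \<Rightarrow> complex)" where
  "vadd x y = (\<lambda>j. x j + y j)"

definition vscale :: "complex \<Rightarrow> ('a \<Rightarrow> complex) \<Rightarrow> ('a \<Rightarrow> complex)" where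
  "vscale c x = (\<lambda>j. c * x j)"

definition vzero :: "'a \<Rightarrow> complex" where
  "vzero = (\<lambda>j. 0)"

definition clinear :: "(('a \<Rightarrow> complex) \<Rightarrow> ('b \<Rightarrow> complex)) \<Rightarrow> bool" where
  "clinear f \<longleftrightarrow> (\<forall>x y. f (vadd x y) = vadd (f x) (f y)) \<and> (\<forall>c x. f (vscale c x) = vscale c (f x))"

definition clinear_functional :: "(('a \<Rightarrow> complex) \<Rightarrow> complex) \<Rightarrow> bool" where
  "clinear_functional f \<longleftrightarrow> (\<forall>x y. f (vadd x y) = f x + f y) \<and> (\<forall>c x. f (vscale c x) = c * f x)"

definition basis_vec :: "'a \<Rightarrow> ('a \<Rightarrow> complex)" where
  "basis_vec a = (\<lambda>j. if j = a then 1 else 0)"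

definition tens :: "('i \<Rightarrow> complex) \<Rightarrow> ('i \<Rightarrow> complex) \<Rightarrow> ('i \<times> 'i \<Rightarrow> complex)" where
  "tens x y = (\<lambda>(a, b). x a * y b)"

text \<open>Multiplication on M \<otimes> M: bilinear extension of (x\<otimes>y)(x'\<otimes>y') = xx' \<otimes> yy'.\<close>
definition tmult :: "(('i::finite \<Rightarrow> complex) \<Rightarrow> ('i \<Rightarrow> complex) \<Rightarrow> ('i \<Rightarrow> complex))
    \<Rightarrow> ('i \<times> 'i \<Rightarrow> complex) \<Rightarrow> ('i \<times> 'i \<Rightarrow> complex) \<Rightarrow> ('i \<times> 'i \<Rightarrow> complex)" where
  "tmult mult T U = (\<lambda>(j, k). \<Sum>a\<in>UNIV. \<Sum>b\<in>UNIV. \<Sum>c\<in>UNIV. \<Sum>d\<in>UNIV.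
      T (a, b) * U (c, d) * mult (basis_vec a) (basis_vec c) j * mult (basis_vec b) (basis_vec d) k)"

text \<open>Involution on M \<otimes> M: antilinear extension of (x\<otimes>y)* = x* \<otimes> y*.\<close>
definition tstar :: "(('i::finite \<Rightarrow> complex) \<Rightarrow> ('i \<Rightarrow> complex))
    \<Rightarrow> ('i \<times> 'i \<Rightarrow> complex) \<Rightarrow> ('i \<times> 'i \<Rightarrow> complex)" where
  "tstar star T = (\<lambda>(j, k). \<Sum>a\<in>UNIV. \<Sum>b\<in>UNIV.
      cnj (T (a, b)) * star (basis_vec a) j * star (basis_vec b) k)"

definition flip :: "('i \<times> 'i \<Rightarrow> complex) \<Rightarrow> ('i \<times> 'i \<Rightarrow> complex)" where
  "flip T = (\<lambda>(j, k). T (k, j))"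

text \<open>f \<otimes> g : M \<otimes> M \<rightarrow> M \<otimes> M for linear f, g : M \<rightarrow> M.\<close>
definition map_both :: "(('i::finite \<Rightarrow> complex) \<Rightarrow> ('i \<Rightarrow> complex)) \<Rightarrow> (('i \<Rightarrow> complex) \<Rightarrow> ('i \<Rightarrow> complex))
    \<Rightarrow> ('i \<times> 'i \<Rightarrow> complex) \<Rightarrow> ('i \<times> 'i \<Rightarrow> complex)" where
  "map_both f g T = (\<lambda>(j, k). \<Sum>a\<in>UNIV. \<Sum>b\<in>UNIV. T (a, b) * f (basis_vec a) j * g (basis_vec b) k)"

text \<open>(\<Delta> \<otimes> id) and (id \<otimes> \<Delta>) : M \<otimes> M \<rightarrow> M \<otimes> M \<otimes> M.\<close>
definition comult_left :: "(('i::finite \<Rightarrow> complex) \<Rightarrow> ('i \<times> 'i \<Rightarrow> complex))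
    \<Rightarrow> ('i \<times> 'i \<Rightarrow> complex) \<Rightarrow> ('i \<times> 'i \<times> 'i \<Rightarrow> complex)" where
  "comult_left D T = (\<lambda>(j, k, l). \<Sum>a\<in>UNIV. T (a, l) * D (basis_vec a) (j, k))"

definition comult_right :: "(('i::finite \<Rightarrow> complex) \<Rightarrow> ('i \<times> 'i \<Rightarrow> complex))
    \<Rightarrow> ('i \<times> 'i \<Rightarrow> complex) \<Rightarrow> ('i \<times> 'i \<times> 'i \<Rightarrow> complex)" where
  "comult_right D T = (\<lambda>(j, k, l). \<Sum>b\<in>UNIV. T (j, b) * D (basis_vec b) (k, l))"

text \<open>(\<epsilon> \<otimes> id), (id \<otimes> \<epsilon>) : M \<otimes> M \<rightarrow> M and (\<epsilon> \<otimes> \<epsilon>) : M \<otimes> M \<rightarrow> \<complex>.\<close>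
definition functional_left :: "(('i::finite \<Rightarrow> complex) \<Rightarrow> complex) \<Rightarrow> ('i \<times> 'i \<Rightarrow> complex) \<Rightarrow> ('i \<Rightarrow> complex)" where
  "functional_left eps T = (\<lambda>k. \<Sum>a\<in>UNIV. eps (basis_vec a) * T (a, k))"

definition functional_right :: "(('i::finite \<Rightarrow> complex) \<Rightarrow> complex) \<Rightarrow> ('i \<times> 'i \<Rightarrow> complex) \<Rightarrow> ('i \<Rightarrow> complex)" where
  "functional_right eps T = (\<lambda>j. \<Sum>b\<in>UNIV. T (j, b) * eps (basis_vec b))"

definition functional_both :: "(('i::finite \<Rightarrow> complex) \<Rightarrow> complex) \<Rightarrow> ('i \<times> 'i \<Rightarrow> complex) \<Rightarrow> complex" where
  "functional_both eps T = (\<Sum>a\<in>UNIV. \<Sum>b\<in>UNIV. T (a, b) * eps (basis_vec a) * eps (basis_vec b))"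

text \<open>\<mu> : M \<otimes> M \<rightarrow> M, \<mu>(x \<otimes> y) = xy.\<close>
definition tmu :: "(('i::finite \<Rightarrow> complex) \<Rightarrow> ('i \<Rightarrow> complex) \<Rightarrow> ('i \<Rightarrow> complex))
    \<Rightarrow> ('i \<times> 'i \<Rightarrow> complex) \<Rightarrow> ('i \<Rightarrow> complex)" where
  "tmu mult T = (\<lambda>j. \<Sum>a\<in>UNIV. \<Sum>b\<in>UNIV. T (a, b) * mult (basis_vec a) (basis_vec b) j)"

text \<open>Finite-dimensional (unital) C*-algebra structure on 'i \<Rightarrow> complex: a unital associative
  *-algebra admitting a C*-norm (completeness is automatic in finite dimension).\<close>
definition C_star_algebra :: "(('i::finite \<Rightarrow> complex) \<Rightarrow> ('i \<Rightarrow> complex) \<Rightarrow> ('i \<Rightarrow> complex))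
    \<Rightarrow> ('i \<Rightarrow> complex) \<Rightarrow> (('i \<Rightarrow> complex) \<Rightarrow> ('i \<Rightarrow> complex)) \<Rightarrow> bool" where
  "C_star_algebra mult one star \<longleftrightarrow>
     (\<forall>x. clinear (mult x) \<and> clinear (\<lambda>y. mult y x)) \<and>
     (\<forall>x y z. mult (mult x y) z = mult x (mult y z)) \<and>
     (\<forall>x. mult one x = x \<and> mult x one = x) \<and>
     (\<forall>x y. star (vadd x y) = vadd (star x) (star y)) \<and>
     (\<forall>c x. star (vscale c x) = vscale (cnj c) (star x)) \<and>
     (\<forall>x. star (star x) = x) \<and>
     (\<forall>x y. star (mult x y) = mult (star y) (star x)) \<and>
     (\<exists>N :: ('i \<Rightarrow> complex) \<Rightarrow> real.
        (\<forall>x. N x = 0 \<longleftrightarrow> x = vzero) \<and>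
        (\<forall>x y. N (vadd x y) \<le> N x + N y) \<and>
        (\<forall>c x. N (vscale c x) = cmod c * N x) \<and>
        (\<forall>x y. N (mult x y) \<le> N x * N y) \<and>
        (\<forall>x. N (mult (star x) x) = (N x)\<^sup>2))"

definition eps_s :: "(('i::finite \<Rightarrow> complex) \<Rightarrow> ('i \<Rightarrow> complex) \<Rightarrow> ('i \<Rightarrow> complex))
    \<Rightarrow> (('i \<Rightarrow> complex) \<Rightarrow> ('i \<times> 'i \<Rightarrow> complex)) \<Rightarrow> (('i \<Rightarrow> complex) \<Rightarrow> ('i \<Rightarrow> complex))
    \<Rightarrow> ('i \<Rightarrow> complex) \<Rightarrow> ('i \<Rightarrow> complex)" where
  "eps_s mult Delta S x = tmu mult (map_both S id (Delta x))"

definition weak_Kac_algebra :: "(('i::finite \<Rightarrow> complex) \<Rightarrow> ('i \<Rightarrow> complex) \<Rightarrow> ('i \<Rightarrow> complex))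
    \<Rightarrow> ('i \<Rightarrow> complex) \<Rightarrow> (('i \<Rightarrow> complex) \<Rightarrow> ('i \<Rightarrow> complex))
    \<Rightarrow> (('i \<Rightarrow> complex) \<Rightarrow> ('i \<times> 'i \<Rightarrow> complex)) \<Rightarrow> (('i \<Rightarrow> complex) \<Rightarrow> ('i \<Rightarrow> complex))
    \<Rightarrow> (('i \<Rightarrow> complex) \<Rightarrow> complex) \<Rightarrow> bool" where
  "weak_Kac_algebra mult one star Delta S eps \<longleftrightarrow>
     C_star_algebra mult one star \<and>
     \<comment> \<open>\<Delta>: injective, not necessarily unital *-homomorphism, coassociative\<close>
     clinear Delta \<and>
     (\<forall>x y. Delta (mult x y) = tmult mult (Delta x) (Delta y)) \<and>
     (\<forall>x. Delta (star x) = tstar star (Delta x)) \<and>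
     inj Delta \<and>
     (\<forall>x. comult_left Delta (Delta x) = comult_right Delta (Delta x)) \<and>
     \<comment> \<open>antipode S\<close>
     clinear S \<and> S one = one \<and>
     (\<forall>x y. S (mult x y) = mult (S y) (S x)) \<and>
     (\<forall>x. S (star x) = star (S x)) \<and>
     bij S \<and> (\<forall>x. S (S x) = x) \<and>
     (\<forall>x. map_both S S (Delta x) = flip (Delta (S x))) \<and>
     \<comment> \<open>counit \<epsilon>\<close>
     clinear_functional eps \<and>
     (\<forall>x. functional_left eps (Delta x) = x) \<and>
     (\<forall>x. functional_right eps (Delta x) = x) \<and>
     (\<forall>x. eps (S x) = eps x) \<and>
     (\<forall>x. eps (star x) = cnj (eps x)) \<and>
     (\<forall>x y. functional_both eps (tmult mult (tmult mult (tens x one) (Delta one)) (tens one y))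
             = eps (mult x y)) \<and>
     (\<forall>x. map_both (eps_s mult Delta S) id (Delta x) = tmult mult (tens one x) (Delta one))"

definition target_Cartan :: "(('i::finite \<Rightarrow> complex) \<Rightarrow> ('i \<Rightarrow> complex) \<Rightarrow> ('i \<Rightarrow> complex))
    \<Rightarrow> ('i \<Rightarrow> complex) \<Rightarrow> (('i \<Rightarrow> complex) \<Rightarrow> ('i \<times> 'i \<Rightarrow> complex)) \<Rightarrow> ('i \<Rightarrow> complex) set" where
  "target_Cartan mult one Delta =
     {x. Delta x = tmult mult (Delta one) (tens x one) \<and> Delta x = tmult mult (tens x one) (Delta one)}"

definition lincomb :: "('a \<Rightarrow> complex) list \<Rightarrow> (nat \<Rightarrow> complex) \<Rightarrow> ('a \<Rightarrow> complex)" where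
  "lincomb bs c = (\<lambda>j. \<Sum>k<length bs. c k * (bs ! k) j)"

definition is_basis_of :: "('a \<Rightarrow> complex) set \<Rightarrow> ('a \<Rightarrow> complex) list \<Rightarrow> bool" where
  "is_basis_of V bs \<longleftrightarrow> set bs \<subseteq> V \<and>
     (\<forall>c. lincomb bs c = vzero \<longrightarrow> (\<forall>k<length bs. c k = 0)) \<and>
     (\<forall>v\<in>V. \<exists>c. v = lincomb bs c)"

definition coord :: "('a \<Rightarrow> complex) list \<Rightarrow> ('a \<Rightarrow> complex) \<Rightarrow> nat \<Rightarrow> complex" where
  "coord bs v = (SOME c. v = lincomb bs c)"

definition op_trace :: "('a \<Rightarrow> complex) set \<Rightarrow> (('a \<Rightarrow> complex) \<Rightarrow> ('a \<Rightarrow> complex)) \<Rightarrow> complex" where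
  "op_trace V f = (let bs = (SOME bs. is_basis_of V bs) in \<Sum>k<length bs. coord bs (f (bs ! k)) k)"

end

theory Submission
  imports Defs "HOL-Library.Function_Algebras"
begin

abbreviation bv where "bv \<equiv> basis_vec"

lemma sum_bv_left[simp]: "(\<Sum>a\<in>UNIV. f a * basis_vec a j) = (f j::complex)" for f :: "'a::finite \<Rightarrow> complex"
  unfolding basis_vec_def by (simp add: if_distrib[of "\<lambda>x. _ * x"] cong: if_cong)
lemma sum_bv_left2[simp]: "(\<Sum>a\<in>UNIV. basis_vec a j * f a) = (f j::complex)" for f :: "'a::finite \<Rightarrow> complex"
  unfolding basis_vec_def by (simp add: if_distrib[of "\<lambda>x. x * _"] cong: if_cong)
lemma sum_bv_right[simp]: "(\<Sum>a\<in>UNIV. f a * basis_vec j a) = (f j::complex)" for f :: "'a::finite \<Rightarrow> complex"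
  unfolding basis_vec_def by (simp add: if_distrib[of "\<lambda>x. _ * x"] cong: if_cong)
lemma sum_bv_right2[simp]: "(\<Sum>a\<in>UNIV. basis_vec j a * f a) = (f j::complex)" for f :: "'a::finite \<Rightarrow> complex"
  unfolding basis_vec_def by (simp add: if_distrib[of "\<lambda>x. x * _"] cong: if_cong)

lemma vec_expand: "x j = (\<Sum>a\<in>UNIV. x a * basis_vec a j)" for x :: "'a::finite \<Rightarrow> complex"
  by simp

lemma clinear_zero: "clinear f \<Longrightarrow> f (\<lambda>j. 0) = (\<lambda>j. 0)"
proof -
  assume "clinear f"
  hence "f (vscale 0 (\<lambda>j. 0)) = vscale 0 (f (\<lambda>j. 0))" by (simp add: clinear_def)
  thus ?thesis by (simp add: vscale_def)
qed

lemma clinear_sum: assumes "clinear f" "finite A"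
  shows "f (\<lambda>j. \<Sum>a\<in>A. g a j) = (\<lambda>j. \<Sum>a\<in>A. f (g a) j)"
  using assms(2)
proof (induction A rule: finite_induct)
  case empty then show ?case using clinear_zero[OF assms(1)] by simp
next
  case (insert x F)
  have "(\<lambda>j. \<Sum>a\<in>insert x F. g a j) = vadd (g x) (\<lambda>j. \<Sum>a\<in>F. g a j)"
    using insert by (simp add: vadd_def)
  hence "f (\<lambda>j. \<Sum>a\<in>insert x F. g a j) = vadd (f (g x)) (\<lambda>j. \<Sum>a\<in>F. f (g a) j)"
    using assms(1) insert by (simp add: clinear_def)
  thus ?case using insert by (simp add: vadd_def)
qed

lemma clinear_lincomb: assumes "clinear f" "finite A"
  shows "f (\<lambda>j. \<Sum>a\<in>A. c a * g a j) = (\<lambda>j. \<Sum>a\<in>A. c a * f (g a) j)"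
proof -
  have "f (\<lambda>j. \<Sum>a\<in>A. c a * g a j) = f (\<lambda>j. \<Sum>a\<in>A. vscale (c a) (g a) j)" by (simp add: vscale_def)
  also have "\<dots> = (\<lambda>j. \<Sum>a\<in>A. f (vscale (c a) (g a)) j)" by (rule clinear_sum[OF assms])
  also have "\<dots> = (\<lambda>j. \<Sum>a\<in>A. c a * f (g a) j)" using assms(1) by (simp add: clinear_def vscale_def)
  finally show ?thesis .
qed

lemma clinear_expand: fixes x :: "'a::finite \<Rightarrow> complex" assumes "clinear f"
  shows "f x k = (\<Sum>a\<in>UNIV. x a * f (basis_vec a) k)"
proof -
  have "x = (\<lambda>j. \<Sum>a\<in>UNIV. x a * basis_vec a j)" by simp
  hence "f x = f (\<lambda>j. \<Sum>a\<in>UNIV. x a * basis_vec a j)" by simp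
  also have "\<dots> = (\<lambda>j. \<Sum>a\<in>UNIV. x a * f (basis_vec a) j)" by (rule clinear_lincomb[OF assms]) simp
  finally show ?thesis by simp
qed

lemma clinear_functional_expand: fixes x :: "'a::finite \<Rightarrow> complex" assumes "clinear_functional f"
  shows "f x = (\<Sum>a\<in>UNIV. x a * f (basis_vec a))"
proof -
  have L: "clinear (\<lambda>y (u::unit). f y)" using assms by (auto simp: clinear_def clinear_functional_def vadd_def vscale_def)
  have "(\<lambda>y (u::unit). f y) x () = (\<Sum>a\<in>UNIV. x a * (\<lambda>y (u::unit). f y) (basis_vec a) ())"
    by (rule clinear_expand[OF L])
  then show ?thesis by simp
qed


lemma sum_fun_apply: "(sum f A) j = (\<Sum>a\<in>A. f a j)"
  by (induction A rule: infinite_finite_induct) (auto simp: plus_fun_def zero_fun_def)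

lemma lincomb_lin: assumes "clinear f"
  shows "f (lincomb bs c) = (\<lambda>j. \<Sum>k<length bs. c k * f (bs ! k) j)"
  unfolding lincomb_def by (rule clinear_lincomb[OF assms]) simp

lemma coord_ok: assumes "is_basis_of V bs" "v \<in> V" shows "v = lincomb bs (coord bs v)"
proof -
  from assms have "\<exists>c. v = lincomb bs c" by (auto simp: is_basis_of_def)
  then show ?thesis unfolding coord_def by (rule someI_ex)
qed

lemma coord_uniq: assumes "is_basis_of V bs" "lincomb bs c = lincomb bs c'" "k < length bs"
  shows "c k = c' k"
proof -
  have E: "(\<Sum>k<length bs. c k * (bs ! k) j) = (\<Sum>k<length bs. c' k * (bs ! k) j)" for j
    using fun_cong[OF assms(2), of j] unfolding lincomb_def by simp
  have "lincomb bs (\<lambda>k. c k - c' k) = vzero"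
    unfolding lincomb_def vzero_def
    by (rule ext) (simp add: left_diff_distrib sum_subtractf E)
  with assms(1,3) have "c k - c' k = 0" unfolding is_basis_of_def by blast
  thus ?thesis by simp
qed

lemma lincomb_delta: "k < length bs \<Longrightarrow> lincomb bs (\<lambda>l. if l = k then 1 else 0) = bs ! k"
  unfolding lincomb_def by (rule ext) (simp add: if_distrib[of "\<lambda>x. x * _"] cong: if_cong)

lemma frame_trace:
  fixes V :: "('a::finite \<Rightarrow> complex) set"
  assumes B: "is_basis_of V bs" and PL: "clinear P" and PV: "\<And>w. P w \<in> V" and PI: "\<And>v. v \<in> V \<Longrightarrow> P v = v"
    and TL: "clinear T" and TV: "\<And>v. v \<in> V \<Longrightarrow> T v \<in> V"
  shows "(\<Sum>k<length bs. coord bs (T (bs ! k)) k) = (\<Sum>r\<in>UNIV. T (P (basis_vec r)) r)"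
proof -
  define n where "n = length bs"
  define c where "c r = coord bs (P (basis_vec r))" for r
  define d where "d l = coord bs (T (bs ! l))" for l
  have inV: "k < n \<Longrightarrow> bs ! k \<in> V" for k using B unfolding is_basis_of_def n_def by auto
  have Pc: "P (basis_vec r) = lincomb bs (c r)" for r unfolding c_def by (rule coord_ok[OF B PV])
  have Td: "l < n \<Longrightarrow> T (bs ! l) = lincomb bs (d l)" for l unfolding d_def by (rule coord_ok[OF B TV[OF inV]])
  have A: "(\<Sum>r\<in>UNIV. (bs ! k) r * c r l) = (if l = k then 1 else 0)" if "k < n" "l < n" for k l
  proof -
    have "bs ! k = P (bs ! k)" using PI[OF inV[OF that(1)]] by simp
    also have "\<dots> = (\<lambda>j. \<Sum>r\<in>UNIV. (bs ! k) r * P (basis_vec r) j)"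
      by (rule ext, rule clinear_expand[OF PL])
    also have "\<dots> = (\<lambda>j. \<Sum>r\<in>UNIV. (bs ! k) r * (\<Sum>l<n. c r l * (bs ! l) j))"
      by (simp add: Pc lincomb_def n_def)
    also have "\<dots> = lincomb bs (\<lambda>l. \<Sum>r\<in>UNIV. (bs ! k) r * c r l)"
      unfolding lincomb_def n_def[symmetric]
      by (rule ext, simp add: sum_distrib_left sum_distrib_right, subst sum.swap, simp add: mult_ac)
    finally have "lincomb bs (\<lambda>l. if l = k then 1 else 0) = lincomb bs (\<lambda>l. \<Sum>r\<in>UNIV. (bs ! k) r * c r l)"
      using lincomb_delta[of k bs] that by (simp add: n_def)
    from coord_uniq[OF B this] that show ?thesis by (simp add: n_def)
  qed
  have "(\<Sum>r\<in>UNIV. T (P (basis_vec r)) r) = (\<Sum>r\<in>UNIV. \<Sum>l<n. c r l * T (bs ! l) r)"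
    by (simp add: Pc lincomb_lin[OF TL] n_def)
  also have "\<dots> = (\<Sum>r\<in>UNIV. \<Sum>l<n. c r l * (\<Sum>m<n. d l m * (bs ! m) r))"
    by (rule sum.cong[OF refl], rule sum.cong[OF refl]) (simp add: Td lincomb_def n_def)
  also have "\<dots> = (\<Sum>l<n. \<Sum>m<n. d l m * (\<Sum>r\<in>UNIV. (bs ! m) r * c r l))"
  proof -
    have "(\<Sum>r\<in>UNIV. \<Sum>l<n. c r l * (\<Sum>m<n. d l m * (bs ! m) r)) = (\<Sum>r\<in>UNIV. \<Sum>l<n. \<Sum>m<n. c r l * d l m * (bs ! m) r)"
      by (simp add: sum_distrib_left mult_ac)
    also have "\<dots> = (\<Sum>l<n. \<Sum>m<n. \<Sum>r\<in>UNIV. c r l * d l m * (bs ! m) r)"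
    proof -
      have "(\<Sum>r\<in>UNIV. \<Sum>l<n. \<Sum>m<n. c r l * d l m * (bs ! m) r) = (\<Sum>l<n. \<Sum>r\<in>UNIV. \<Sum>m<n. c r l * d l m * (bs ! m) r)"
        by (rule sum.swap)
      also have "\<dots> = (\<Sum>l<n. \<Sum>m<n. \<Sum>r\<in>UNIV. c r l * d l m * (bs ! m) r)"
        by (rule sum.cong[OF refl], rule sum.swap)
      finally show ?thesis .
    qed
    also have "\<dots> = (\<Sum>l<n. \<Sum>m<n. d l m * (\<Sum>r\<in>UNIV. (bs ! m) r * c r l))"
      by (simp add: sum_distrib_left mult_ac)
    finally show ?thesis .
  qed
  also have "\<dots> = (\<Sum>l<n. \<Sum>m<n. d l m * (if l = m then 1 else 0))"
    by (rule sum.cong[OF refl], rule sum.cong[OF refl]) (simp add: A)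
  also have "\<dots> = (\<Sum>l<n. d l l)"
    by (simp add: if_distrib[of "\<lambda>x. _ * x"] cong: if_cong)
  finally show ?thesis by (simp add: d_def n_def)
qed

lemma basis_exists_proj:
  fixes V :: "('a::finite \<Rightarrow> complex) set"
  assumes PL: "clinear P" and PV: "\<And>w. P w \<in> V" and PI: "\<And>v. v \<in> V \<Longrightarrow> P v = v"
  shows "\<exists>bs. is_basis_of V bs"
proof -
  interpret vs: vector_space "vscale :: complex \<Rightarrow> ('a \<Rightarrow> complex) \<Rightarrow> ('a \<Rightarrow> complex)"
    by unfold_locales (auto simp: vscale_def plus_fun_def algebra_simps)
  have sc: "vscale c x = (\<lambda>j. c * x j)" for c x by (simp add: vscale_def)
  obtain B where B1: "B \<subseteq> V" and B2: "vs.independent B" and B3: "V \<subseteq> vs.span B"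
    by (rule vs.basis_exists)
  let ?T = "range (\<lambda>r. P (basis_vec r))"
  have "V \<subseteq> vs.span ?T"
  proof
    fix v assume "v \<in> V"
    have "v = P v" using PI[OF \<open>v \<in> V\<close>] by simp
    also have "\<dots> = (\<Sum>r\<in>UNIV. vscale (v r) (P (basis_vec r)))"
    proof
      fix j
      have "P v j = (\<Sum>r\<in>UNIV. v r * P (basis_vec r) j)" by (rule clinear_expand[OF PL])
      thus "P v j = (\<Sum>r\<in>UNIV. vscale (v r) (P (basis_vec r))) j" by (simp add: sum_fun_apply sc)
    qed
    finally have "v = (\<Sum>r\<in>UNIV. vscale (v r) (P (basis_vec r)))" .
    moreover have "(\<Sum>r\<in>UNIV. vscale (v r) (P (basis_vec r))) \<in> vs.span ?T"
      by (intro vs.span_sum vs.span_scale vs.span_base) auto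
    ultimately show "v \<in> vs.span ?T" by simp
  qed
  with B1 have "B \<subseteq> vs.span ?T" by blast
  from vs.independent_span_bound[OF _ B2 this] have fin: "finite B" by simp
  obtain bs where bs1: "set bs = B" and bs2: "distinct bs" using finite_distinct_list[OF fin] by blast
  define n where "n = length bs"
  have inj: "inj_on (nth bs) {..<n}" using bs2 by (simp add: inj_on_def nth_eq_iff_index_eq n_def)
  have img: "nth bs ` {..<n} = B" using bs1 by (auto simp: n_def in_set_conv_nth)
  have reidx: "(\<Sum>v\<in>B. g v) = (\<Sum>k<n. g (bs ! k))" for g :: "_ \<Rightarrow> 'a \<Rightarrow> complex"
    by (subst img[symmetric], rule sum.reindex[OF inj, unfolded comp_def])
  have lc: "lincomb bs c = (\<Sum>k<n. vscale (c k) (bs ! k))" for c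
    by (rule ext) (simp add: lincomb_def sum_fun_apply sc n_def)
  have "is_basis_of V bs"
    unfolding is_basis_of_def
  proof (intro conjI allI impI ballI)
    show "set bs \<subseteq> V" using bs1 B1 by simp
  next
    fix c k assume c0: "lincomb bs c = vzero" and k: "k < length bs"
    define u where "u v = c (the_inv_into {..<n} (nth bs) v)" for v
    have uk: "u (bs ! l) = c l" if "l < n" for l using the_inv_into_f_f[OF inj] that by (simp add: u_def)
    have "(\<Sum>v\<in>B. vscale (u v) v) = (\<Sum>k<n. vscale (c k) (bs ! k))"
      by (simp add: reidx uk)
    also have "\<dots> = 0" using c0 lc by (simp add: vzero_def zero_fun_def)
    finally have "(\<Sum>v\<in>B. vscale (u v) v) = 0" .
    with B2 fin have "\<forall>v\<in>B. u v = 0" using vs.dependent_finite by blast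
    moreover have "bs ! k \<in> B" using k bs1 by auto
    ultimately show "c k = 0" using uk k by (auto simp: n_def)
  next
    fix v assume "v \<in> V"
    with B3 have "v \<in> vs.span B" by blast
    then obtain u where "v = (\<Sum>w\<in>B. vscale (u w) w)" using vs.span_finite[OF fin] by blast
    also have "\<dots> = lincomb bs (\<lambda>k. u (bs ! k))" by (simp add: reidx lc)
    finally show "\<exists>c. v = lincomb bs c" by blast
  qed
  thus ?thesis by blast
qed

lemma swap4: "(\<Sum>a\<in>A. \<Sum>b\<in>B. \<Sum>c\<in>C. \<Sum>d\<in>D. f a b c d) = (\<Sum>c\<in>C. \<Sum>d\<in>D. \<Sum>a\<in>A. \<Sum>b\<in>B. f a b c d)"
proof -
  have "(\<Sum>a\<in>A. \<Sum>b\<in>B. \<Sum>c\<in>C. \<Sum>d\<in>D. f a b c d) = (\<Sum>a\<in>A. \<Sum>c\<in>C. \<Sum>b\<in>B. \<Sum>d\<in>D. f a b c d)"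
    by (rule sum.cong[OF refl], rule sum.swap)
  also have "\<dots> = (\<Sum>c\<in>C. \<Sum>a\<in>A. \<Sum>b\<in>B. \<Sum>d\<in>D. f a b c d)" by (rule sum.swap)
  also have "\<dots> = (\<Sum>c\<in>C. \<Sum>a\<in>A. \<Sum>d\<in>D. \<Sum>b\<in>B. f a b c d)"
    by (rule sum.cong[OF refl], rule sum.cong[OF refl], rule sum.swap)
  also have "\<dots> = (\<Sum>c\<in>C. \<Sum>d\<in>D. \<Sum>a\<in>A. \<Sum>b\<in>B. f a b c d)"
    by (rule sum.cong[OF refl], rule sum.swap)
  finally show ?thesis .
qed

lemma clinear_comp: "clinear f \<Longrightarrow> clinear g \<Longrightarrow> clinear (\<lambda>x. g (f x))"
  by (simp add: clinear_def)

lemma LIN_EXT: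
  fixes F G :: "('a::finite \<Rightarrow> complex) \<Rightarrow> ('b \<Rightarrow> complex)"
  assumes "clinear F" "clinear G" "\<And>p. F (basis_vec p) = G (basis_vec p)"
  shows "F T = G T"
proof
  fix q
  have "F T q = (\<Sum>p\<in>UNIV. T p * F (basis_vec p) q)" by (rule clinear_expand[OF assms(1)])
  also have "\<dots> = (\<Sum>p\<in>UNIV. T p * G (basis_vec p) q)" by (simp add: assms(3))
  also have "\<dots> = G T q" by (rule clinear_expand[OF assms(2), symmetric])
  finally show "F T q = G T q" .
qed

lemma bv_pair: "basis_vec (a,b) = tens (basis_vec a) (basis_vec b)"
  by (rule ext, clarify, simp add: basis_vec_def tens_def)


locale wka =
  fixes mult :: "('i::finite \<Rightarrow> complex) \<Rightarrow> ('i \<Rightarrow> complex) \<Rightarrow> ('i \<Rightarrow> complex)"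
    and one :: "'i \<Rightarrow> complex"
    and star :: "('i \<Rightarrow> complex) \<Rightarrow> ('i \<Rightarrow> complex)"
    and Delta :: "('i \<Rightarrow> complex) \<Rightarrow> ('i \<times> 'i \<Rightarrow> complex)"
    and S :: "('i \<Rightarrow> complex) \<Rightarrow> ('i \<Rightarrow> complex)"
    and eps :: "('i \<Rightarrow> complex) \<Rightarrow> complex"
  assumes W: "weak_Kac_algebra mult one star Delta S eps"
begin

lemma C: "C_star_algebra mult one star" using W by (simp add: weak_Kac_algebra_def)
lemma mult_lin1: "clinear (mult x)" using C by (simp add: C_star_algebra_def)
lemma mult_lin2: "clinear (\<lambda>y. mult y x)" using C by (simp add: C_star_algebra_def)
lemma assoc: "mult (mult x y) z = mult x (mult y z)" using C by (simp add: C_star_algebra_def)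
lemma one_left[simp]: "mult one x = x" using C by (simp add: C_star_algebra_def)
lemma one_right[simp]: "mult x one = x" using C by (simp add: C_star_algebra_def)
lemma star_add: "star (vadd x y) = vadd (star x) (star y)" using C by (simp add: C_star_algebra_def)
lemma star_scale: "star (vscale c x) = vscale (cnj c) (star x)" using C by (simp add: C_star_algebra_def)
lemma star_star[simp]: "star (star x) = x" using C by (simp add: C_star_algebra_def)
lemma star_mult: "star (mult x y) = mult (star y) (star x)" using C by (simp add: C_star_algebra_def)
lemma Delta_lin: "clinear Delta" using W by (simp add: weak_Kac_algebra_def)
lemma Delta_mult: "Delta (mult x y) = tmult mult (Delta x) (Delta y)" using W by (simp add: weak_Kac_algebra_def)
lemma Delta_star: "Delta (star x) = tstar star (Delta x)" using W by (simp add: weak_Kac_algebra_def)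
lemma coassoc: "comult_left Delta (Delta x) = comult_right Delta (Delta x)" using W by (simp add: weak_Kac_algebra_def)
lemma S_lin: "clinear S" using W by (simp add: weak_Kac_algebra_def)
lemma S_one[simp]: "S one = one" using W by (simp add: weak_Kac_algebra_def)
lemma S_mult: "S (mult x y) = mult (S y) (S x)" using W by (simp add: weak_Kac_algebra_def)
lemma S_star: "S (star x) = star (S x)" using W by (simp add: weak_Kac_algebra_def)
lemma S_S[simp]: "S (S x) = x" using W by (simp add: weak_Kac_algebra_def)
lemma S_Delta: "map_both S S (Delta x) = flip (Delta (S x))" using W by (simp add: weak_Kac_algebra_def)
lemma eps_lin: "clinear_functional eps" using W by (simp add: weak_Kac_algebra_def)
lemma counit_l: "functional_left eps (Delta x) = x" using W by (simp add: weak_Kac_algebra_def)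
lemma counit_r: "functional_right eps (Delta x) = x" using W by (simp add: weak_Kac_algebra_def)
lemma eps_S: "eps (S x) = eps x" using W by (simp add: weak_Kac_algebra_def)
lemma eps_star: "eps (star x) = cnj (eps x)" using W by (simp add: weak_Kac_algebra_def)
lemma D_ax: "map_both (eps_s mult Delta S) id (Delta x) = tmult mult (tens one x) (Delta one)"
  using W by (simp add: weak_Kac_algebra_def)

lemma mult_exp2: "mult x (bv d) j = (\<Sum>a\<in>UNIV. x a * mult (bv a) (bv d) j)"
  using clinear_expand[OF mult_lin2, where x=x and k=j] by simp
lemma mult_exp1: "mult (bv d) y j = (\<Sum>c\<in>UNIV. y c * mult (bv d) (bv c) j)"
  by (rule clinear_expand[OF mult_lin1])
lemma S_exp: "S x j = (\<Sum>a\<in>UNIV. x a * S (bv a) j)"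
  by (rule clinear_expand[OF S_lin])
lemma Delta_exp: "Delta x p = (\<Sum>a\<in>UNIV. x a * Delta (bv a) p)"
  by (rule clinear_expand[OF Delta_lin])
lemma eps_exp: "eps x = (\<Sum>a\<in>UNIV. x a * eps (bv a))"
  by (rule clinear_functional_expand[OF eps_lin])

lemma star_exp: "star x j = (\<Sum>a\<in>UNIV. cnj (x a) * star (bv a) j)"
proof -
  let ?G = "\<lambda>y. star (\<lambda>i. cnj (y i))"
  have L: "clinear ?G"
  proof -
    have 1: "?G (vadd x y) = vadd (?G x) (?G y)" for x y
      using star_add[of "\<lambda>i. cnj (x i)" "\<lambda>i. cnj (y i)"] by (simp add: vadd_def)
    have 2: "?G (vscale c x) = vscale c (?G x)" for c x
      using star_scale[of "cnj c" "\<lambda>i. cnj (x i)"] by (simp add: vscale_def)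
    show ?thesis using 1 2 by (simp add: clinear_def)
  qed
  have E: "(\<lambda>i. cnj (bv a i)) = bv a" for a by (auto simp: basis_vec_def)
  have "?G (\<lambda>i. cnj (x i)) j = (\<Sum>a\<in>UNIV. cnj (x a) * ?G (bv a) j)" by (rule clinear_expand[OF L])
  then show ?thesis by (simp only: E complex_cnj_cnj)
qed

lemma TL: "tmult mult (tens x y) U (j,k) = (\<Sum>c\<in>UNIV. \<Sum>d\<in>UNIV. U (c,d) * mult x (bv c) j * mult y (bv d) k)"
proof -
  have "tmult mult (tens x y) U (j,k) = (\<Sum>a\<in>UNIV. \<Sum>b\<in>UNIV. \<Sum>c\<in>UNIV. \<Sum>d\<in>UNIV.
      x a * y b * U (c, d) * mult (bv a) (bv c) j * mult (bv b) (bv d) k)"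
    by (simp add: tmult_def tens_def)
  also have "\<dots> = (\<Sum>c\<in>UNIV. \<Sum>d\<in>UNIV. \<Sum>a\<in>UNIV. \<Sum>b\<in>UNIV.
      x a * y b * U (c, d) * mult (bv a) (bv c) j * mult (bv b) (bv d) k)" by (rule swap4)
  also have "\<dots> = (\<Sum>c\<in>UNIV. \<Sum>d\<in>UNIV. U (c,d) * mult x (bv c) j * mult y (bv d) k)"
    by (simp add: mult_exp2[of x] mult_exp2[of y] sum_distrib_left sum_distrib_right mult_ac)
  finally show ?thesis .
qed

lemma TR: "tmult mult T (tens x y) (j,k) = (\<Sum>a\<in>UNIV. \<Sum>b\<in>UNIV. T (a,b) * mult (bv a) x j * mult (bv b) y k)"
  by (simp add: tmult_def tens_def mult_exp1[of _ x] mult_exp1[of _ y] sum_distrib_left sum_distrib_right mult_ac)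


lemma mult_expL: "mult y w k = (\<Sum>b\<in>UNIV. y b * mult (bv b) w k)"
  by (rule clinear_expand[OF mult_lin2])
lemma mult_expR: "mult w y k = (\<Sum>c\<in>UNIV. y c * mult w (bv c) k)"
  by (rule clinear_expand[OF mult_lin1])

lemma TL1: "tmult mult (tens one z) U (j,k) = (\<Sum>d\<in>UNIV. U (j,d) * mult z (bv d) k)"
proof -
  have "tmult mult (tens one z) U (j,k) = (\<Sum>c\<in>UNIV. bv c j * (\<Sum>d\<in>UNIV. U (c,d) * mult z (bv d) k))"
    by (simp add: TL sum_distrib_left mult_ac)
  also have "\<dots> = (\<Sum>d\<in>UNIV. U (j,d) * mult z (bv d) k)" by (rule sum_bv_left2)
  finally show ?thesis .
qed

lemma TL1': "tmult mult (tens y one) U (j,k) = (\<Sum>c\<in>UNIV. U (c,k) * mult y (bv c) j)"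
proof -
  have "tmult mult (tens y one) U (j,k) = (\<Sum>c\<in>UNIV. mult y (bv c) j * (\<Sum>d\<in>UNIV. U (c,d) * bv d k))"
    by (simp add: TL sum_distrib_left mult_ac)
  also have "\<dots> = (\<Sum>c\<in>UNIV. U (c,k) * mult y (bv c) j)" by (simp add: mult_ac)
  finally show ?thesis .
qed

lemma TR1: "tmult mult T (tens y one) (j,k) = (\<Sum>a\<in>UNIV. T (a,k) * mult (bv a) y j)"
proof -
  have "tmult mult T (tens y one) (j,k) = (\<Sum>a\<in>UNIV. mult (bv a) y j * (\<Sum>b\<in>UNIV. T (a,b) * bv b k))"
    by (simp add: TR sum_distrib_left mult_ac)
  also have "\<dots> = (\<Sum>a\<in>UNIV. T (a,k) * mult (bv a) y j)" by (simp add: mult_ac)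
  finally show ?thesis .
qed

lemma TR1': "tmult mult T (tens one z) (j,k) = (\<Sum>b\<in>UNIV. T (j,b) * mult (bv b) z k)"
proof -
  have "tmult mult T (tens one z) (j,k) = (\<Sum>a\<in>UNIV. bv a j * (\<Sum>b\<in>UNIV. T (a,b) * mult (bv b) z k))"
    by (simp add: TR sum_distrib_left mult_ac)
  also have "\<dots> = (\<Sum>b\<in>UNIV. T (j,b) * mult (bv b) z k)" by (rule sum_bv_left2)
  finally show ?thesis .
qed

lemma MB_id: "map_both f id T (j,k) = (\<Sum>p\<in>UNIV. T (p,k) * f (bv p) j)"
proof -
  have "map_both f id T (j,k) = (\<Sum>p\<in>UNIV. f (bv p) j * (\<Sum>q\<in>UNIV. T (p,q) * bv q k))"
    by (simp add: map_both_def sum_distrib_left mult_ac)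
  also have "\<dots> = (\<Sum>p\<in>UNIV. T (p,k) * f (bv p) j)" by (simp add: mult_ac)
  finally show ?thesis .
qed

abbreviation "e \<equiv> Delta one"
abbreviation "sig p \<equiv> eps_s mult Delta S (bv p)"

lemma A1: "(\<Sum>p\<in>UNIV. Delta (bv a) (p,k) * sig p j) = (\<Sum>d\<in>UNIV. e (j,d) * mult (bv a) (bv d) k)"
  using fun_cong[OF D_ax[of "bv a"], of "(j,k)"] by (simp add: MB_id TL1)

lemma A0: "(\<Sum>p\<in>UNIV. e (p,k) * sig p j) = e (j,k)"
  using fun_cong[OF D_ax[of one], of "(j,k)"] by (simp add: MB_id TL1)

lemma A2: "(\<Sum>a\<in>UNIV. e (a,l) * Delta (bv a) (j,k)) = (\<Sum>b\<in>UNIV. e (j,b) * Delta (bv b) (k,l))"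
  using fun_cong[OF coassoc[of one], of "(j,k,l)"] by (simp add: comult_left_def comult_right_def)


lemma F1: "(\<Sum>b\<in>UNIV. e (j,b) * Delta (bv b) (k,l)) = (\<Sum>a\<in>UNIV. \<Sum>d\<in>UNIV. e (j,d) * e (a,l) * mult (bv a) (bv d) k)"
proof -
  have "(\<Sum>b\<in>UNIV. e (j,b) * Delta (bv b) (k,l)) = (\<Sum>b\<in>UNIV. (\<Sum>p\<in>UNIV. e (p,b) * sig p j) * Delta (bv b) (k,l))"
    by (simp add: A0)
  also have "\<dots> = (\<Sum>p\<in>UNIV. sig p j * (\<Sum>b\<in>UNIV. e (p,b) * Delta (bv b) (k,l)))"
    by (simp add: sum_distrib_left sum_distrib_right, subst sum.swap, simp add: mult_ac)
  also have "\<dots> = (\<Sum>p\<in>UNIV. sig p j * (\<Sum>a\<in>UNIV. e (a,l) * Delta (bv a) (p,k)))"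
    by (simp add: A2)
  also have "\<dots> = (\<Sum>a\<in>UNIV. e (a,l) * (\<Sum>p\<in>UNIV. Delta (bv a) (p,k) * sig p j))"
    by (simp add: sum_distrib_left sum_distrib_right, subst sum.swap, simp add: mult_ac)
  also have "\<dots> = (\<Sum>a\<in>UNIV. e (a,l) * (\<Sum>d\<in>UNIV. e (j,d) * mult (bv a) (bv d) k))"
    by (simp add: A1)
  also have "\<dots> = (\<Sum>a\<in>UNIV. \<Sum>d\<in>UNIV. e (j,d) * e (a,l) * mult (bv a) (bv d) k)"
    by (simp add: sum_distrib_left mult_ac)
  finally show ?thesis .
qed

lemma eps_s_lin: "clinear (eps_s mult Delta S)"
proof -
  have DA: "Delta (vadd x y) = vadd (Delta x) (Delta y)" for x y using Delta_lin by (simp add: clinear_def)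
  have DS: "Delta (vscale c x) = vscale c (Delta x)" for c x using Delta_lin by (simp add: clinear_def)
  show ?thesis
    unfolding clinear_def eps_s_def DA DS
    by (auto simp: tmu_def MB_id vadd_def vscale_def algebra_simps sum.distrib sum_distrib_left intro!: ext)
qed

lemma eps_s_exp: "eps_s mult Delta S x j = (\<Sum>p\<in>UNIV. x p * sig p j)"
  by (rule clinear_expand[OF eps_s_lin])

lemma sig_formula: "sig a j = (\<Sum>d\<in>UNIV. e (j,d) * eps (mult (bv a) (bv d)))"
proof -
  have CR: "(\<Sum>k\<in>UNIV. Delta (bv a) (p,k) * eps (bv k)) = bv a p" for p
    using fun_cong[OF counit_r[of "bv a"], of p] by (simp add: functional_right_def)
  have "sig a j = (\<Sum>p\<in>UNIV. sig p j * bv a p)" by simp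
  also have "\<dots> = (\<Sum>p\<in>UNIV. sig p j * (\<Sum>k\<in>UNIV. Delta (bv a) (p,k) * eps (bv k)))"
    by (simp only: CR)
  also have "\<dots> = (\<Sum>k\<in>UNIV. eps (bv k) * (\<Sum>p\<in>UNIV. Delta (bv a) (p,k) * sig p j))"
    by (simp add: sum_distrib_left sum_distrib_right, subst sum.swap, simp add: mult_ac)
  also have "\<dots> = (\<Sum>k\<in>UNIV. eps (bv k) * (\<Sum>d\<in>UNIV. e (j,d) * mult (bv a) (bv d) k))"
    by (simp add: A1)
  also have "\<dots> = (\<Sum>d\<in>UNIV. e (j,d) * eps (mult (bv a) (bv d)))"
    by (simp add: eps_exp[of "mult (bv a) (bv _)"] sum_distrib_left sum_distrib_right, subst sum.swap, simp add: mult_ac)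
  finally show ?thesis .
qed

lemma F3: "eps_s mult Delta S x j = (\<Sum>d\<in>UNIV. e (j,d) * eps (mult x (bv d)))"
proof -
  have "eps_s mult Delta S x j = (\<Sum>p\<in>UNIV. x p * (\<Sum>d\<in>UNIV. e (j,d) * eps (mult (bv p) (bv d))))"
    by (simp only: eps_s_exp[of x] sig_formula)
  also have "\<dots> = (\<Sum>d\<in>UNIV. e (j,d) * (\<Sum>p\<in>UNIV. x p * eps (mult (bv p) (bv d))))"
    by (simp add: sum_distrib_left sum_distrib_right, subst sum.swap, simp add: mult_ac)
  also have "\<dots> = (\<Sum>d\<in>UNIV. e (j,d) * eps (mult x (bv d)))"
  proof -
    have "(\<Sum>p\<in>UNIV. x p * eps (mult (bv p) (bv d))) = eps (mult x (bv d))" for d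
    proof -
      have "eps (mult x (bv d)) = (\<Sum>k\<in>UNIV. mult x (bv d) k * eps (bv k))" by (rule eps_exp)
      also have "\<dots> = (\<Sum>k\<in>UNIV. (\<Sum>p\<in>UNIV. x p * mult (bv p) (bv d) k) * eps (bv k))"
        by (simp only: mult_exp2[of x])
      also have "\<dots> = (\<Sum>p\<in>UNIV. x p * (\<Sum>k\<in>UNIV. mult (bv p) (bv d) k * eps (bv k)))"
        by (simp add: sum_distrib_left sum_distrib_right, subst sum.swap, simp add: mult_ac)
      also have "\<dots> = (\<Sum>p\<in>UNIV. x p * eps (mult (bv p) (bv d)))"
        by (simp only: eps_exp[of "mult (bv _) (bv d)"])
      finally show ?thesis by simp
    qed
    then show ?thesis by simp
  qed
  finally show ?thesis .
qed

lemma F4: "eps_s mult Delta S one = one"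
proof
  fix j
  have "eps_s mult Delta S one j = (\<Sum>d\<in>UNIV. e (j,d) * eps (bv d))" by (simp add: F3)
  also have "\<dots> = one j" using fun_cong[OF counit_r[of one], of j] by (simp add: functional_right_def)
  finally show "eps_s mult Delta S one j = one j" .
qed


lemma swap_inner: "(\<Sum>p\<in>A. \<Sum>q\<in>B. \<Sum>d\<in>C. f p q d) = (\<Sum>p\<in>A. \<Sum>d\<in>C. \<Sum>q\<in>B. f p q d)"
  by (rule sum.cong[OF refl], rule sum.swap)

lemma swap13: "(\<Sum>x\<in>A. \<Sum>y\<in>B. \<Sum>z\<in>C. f x y z) = (\<Sum>z\<in>C. \<Sum>y\<in>B. \<Sum>x\<in>A. f x y z)"
proof -
  have "(\<Sum>x\<in>A. \<Sum>y\<in>B. \<Sum>z\<in>C. f x y z) = (\<Sum>x\<in>A. \<Sum>z\<in>C. \<Sum>y\<in>B. f x y z)" by (rule swap_inner)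
  also have "\<dots> = (\<Sum>z\<in>C. \<Sum>x\<in>A. \<Sum>y\<in>B. f x y z)" by (rule sum.swap)
  also have "\<dots> = (\<Sum>z\<in>C. \<Sum>y\<in>B. \<Sum>x\<in>A. f x y z)" by (rule sum.cong[OF refl], rule sum.swap)
  finally show ?thesis .
qed

lemma rot3: "(\<Sum>z\<in>C. \<Sum>x\<in>A. \<Sum>y\<in>B. f x y z) = (\<Sum>x\<in>A. \<Sum>y\<in>B. \<Sum>z\<in>C. f x y z)"
proof -
  have "(\<Sum>z\<in>C. \<Sum>x\<in>A. \<Sum>y\<in>B. f x y z) = (\<Sum>x\<in>A. \<Sum>z\<in>C. \<Sum>y\<in>B. f x y z)" by (rule sum.swap)
  also have "\<dots> = (\<Sum>x\<in>A. \<Sum>y\<in>B. \<Sum>z\<in>C. f x y z)" by (rule sum.cong[OF refl], rule sum.swap)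
  finally show ?thesis .
qed

definition zf :: "('i \<Rightarrow> complex) \<Rightarrow> ('i \<Rightarrow> complex)" where
  "zf \<phi> = (\<lambda>j. \<Sum>d\<in>UNIV. e (j,d) * \<phi> d)"

lemma G: "Delta (zf \<phi>) = tmult mult (tens one (zf \<phi>)) e"
proof (rule ext, clarify)
  fix k l
  have "Delta (zf \<phi>) (k,l) = (\<Sum>j\<in>UNIV. (\<Sum>d\<in>UNIV. e (j,d) * \<phi> d) * Delta (bv j) (k,l))"
    by (subst Delta_exp, simp add: zf_def)
  also have "\<dots> = (\<Sum>d\<in>UNIV. \<phi> d * (\<Sum>j\<in>UNIV. e (j,d) * Delta (bv j) (k,l)))"
    by (simp add: sum_distrib_left sum_distrib_right, subst sum.swap, simp add: mult_ac)
  also have "\<dots> = (\<Sum>d\<in>UNIV. \<phi> d * (\<Sum>b\<in>UNIV. e (k,b) * Delta (bv b) (l,d)))"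
    by (simp only: A2)
  also have "\<dots> = (\<Sum>d\<in>UNIV. \<phi> d * (\<Sum>a\<in>UNIV. \<Sum>d'\<in>UNIV. e (k,d') * e (a,d) * mult (bv a) (bv d') l))"
    by (simp only: F1)
  also have "\<dots> = (\<Sum>d\<in>UNIV. \<Sum>a\<in>UNIV. \<Sum>d'\<in>UNIV. \<phi> d * e (k,d') * e (a,d) * mult (bv a) (bv d') l)"
    by (simp add: sum_distrib_left mult_ac)
  also have "\<dots> = (\<Sum>d'\<in>UNIV. \<Sum>a\<in>UNIV. \<Sum>d\<in>UNIV. \<phi> d * e (k,d') * e (a,d) * mult (bv a) (bv d') l)"
    by (rule swap13)
  also have "\<dots> = (\<Sum>d'\<in>UNIV. e (k,d') * (\<Sum>a\<in>UNIV. (\<Sum>d\<in>UNIV. e (a,d) * \<phi> d) * mult (bv a) (bv d') l))"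
    by (simp add: sum_distrib_left sum_distrib_right mult_ac)
  also have "\<dots> = tmult mult (tens one (zf \<phi>)) e (k,l)"
    by (simp only: TL1 mult_exp2[of "zf \<phi>"], simp add: zf_def)
  finally show "Delta (zf \<phi>) (k,l) = tmult mult (tens one (zf \<phi>)) e (k,l)" .
qed

lemma star_one[simp]: "star one = one"
proof -
  have "star (mult one (star one)) = mult (star (star one)) (star one)" by (rule star_mult)
  thus ?thesis by simp
qed

lemma tstar_e[simp]: "tstar star e = e"
  using Delta_star[of one] by simp

lemma star_zf: "star (zf \<phi>) = zf (\<lambda>d'. cnj (\<Sum>c\<in>UNIV. \<phi> c * star (bv d') c))"
proof
  fix j'
  have K: "(\<Sum>d'\<in>UNIV. star (bv b) d' * cnj (\<Sum>c\<in>UNIV. \<phi> c * star (bv d') c)) = cnj (\<phi> b)" for b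
  proof -
    have "(\<Sum>d'\<in>UNIV. star (bv b) d' * cnj (\<Sum>c\<in>UNIV. \<phi> c * star (bv d') c))
        = cnj (\<Sum>c\<in>UNIV. \<phi> c * (\<Sum>d'\<in>UNIV. cnj (star (bv b) d') * star (bv d') c))"
      by (simp add: sum_distrib_left sum_distrib_right, subst sum.swap, simp add: mult_ac)
    also have "\<dots> = cnj (\<Sum>c\<in>UNIV. \<phi> c * star (star (bv b)) c)"
      by (simp only: star_exp[of "star (bv b)"])
    also have "\<dots> = cnj (\<phi> b)" by simp
    finally show ?thesis .
  qed
  have "zf (\<lambda>d'. cnj (\<Sum>c\<in>UNIV. \<phi> c * star (bv d') c)) j'
      = (\<Sum>d'\<in>UNIV. tstar star e (j',d') * cnj (\<Sum>c\<in>UNIV. \<phi> c * star (bv d') c))"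
    by (simp add: zf_def)
  also have "\<dots> = (\<Sum>d'\<in>UNIV. (\<Sum>a\<in>UNIV. \<Sum>b\<in>UNIV. cnj (e (a,b)) * star (bv a) j' * star (bv b) d') * cnj (\<Sum>c\<in>UNIV. \<phi> c * star (bv d') c))"
    by (simp only: tstar_def split)
  also have "\<dots> = (\<Sum>d'\<in>UNIV. \<Sum>a\<in>UNIV. \<Sum>b\<in>UNIV. cnj (e (a,b)) * star (bv a) j' * star (bv b) d' * cnj (\<Sum>c\<in>UNIV. \<phi> c * star (bv d') c))"
    by (simp only: sum_distrib_right)
  also have "\<dots> = (\<Sum>a\<in>UNIV. \<Sum>b\<in>UNIV. \<Sum>d'\<in>UNIV. cnj (e (a,b)) * star (bv a) j' * star (bv b) d' * cnj (\<Sum>c\<in>UNIV. \<phi> c * star (bv d') c))"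
    by (rule rot3)
  also have "\<dots> = (\<Sum>a\<in>UNIV. \<Sum>b\<in>UNIV. cnj (e (a,b)) * star (bv a) j' * (\<Sum>d'\<in>UNIV. star (bv b) d' * cnj (\<Sum>c\<in>UNIV. \<phi> c * star (bv d') c)))"
    by (simp only: sum_distrib_left mult.assoc)
  also have "\<dots> = (\<Sum>a\<in>UNIV. \<Sum>b\<in>UNIV. cnj (e (a,b)) * star (bv a) j' * cnj (\<phi> b))"
    by (simp only: K)
  also have "\<dots> = star (zf \<phi>) j'"
    by (simp only: star_exp[of "zf \<phi>"], simp add: zf_def sum_distrib_left sum_distrib_right mult_ac)
  finally show "star (zf \<phi>) j' = zf (\<lambda>d'. cnj (\<Sum>c\<in>UNIV. \<phi> c * star (bv d') c)) j'" by simp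
qed


lemma TS: "tstar star (tmult mult (tens one z) T) = tmult mult (tstar star T) (tens one (star z))"
proof (rule ext, clarify)
  fix j k
  have "tstar star (tmult mult (tens one z) T) (j,k)
     = (\<Sum>p\<in>UNIV. \<Sum>q\<in>UNIV. cnj (\<Sum>d\<in>UNIV. T (p,d) * mult z (bv d) q) * star (bv p) j * star (bv q) k)"
    by (simp only: tstar_def split TL1)
  also have "\<dots> = (\<Sum>p\<in>UNIV. \<Sum>q\<in>UNIV. \<Sum>d\<in>UNIV. cnj (T (p,d)) * star (bv p) j * (cnj (mult z (bv d) q) * star (bv q) k))"
    by (simp add: sum_distrib_left sum_distrib_right mult_ac)
  also have "\<dots> = (\<Sum>p\<in>UNIV. \<Sum>d\<in>UNIV. \<Sum>q\<in>UNIV. cnj (T (p,d)) * star (bv p) j * (cnj (mult z (bv d) q) * star (bv q) k))"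
    by (rule swap_inner)
  also have "\<dots> = (\<Sum>p\<in>UNIV. \<Sum>d\<in>UNIV. cnj (T (p,d)) * star (bv p) j * star (mult z (bv d)) k)"
    by (simp only: sum_distrib_left[symmetric] star_exp[of "mult z (bv _)"])
  also have "\<dots> = (\<Sum>p\<in>UNIV. \<Sum>d\<in>UNIV. cnj (T (p,d)) * star (bv p) j * (\<Sum>b\<in>UNIV. star (bv d) b * mult (bv b) (star z) k))"
    by (simp only: star_mult mult_expL[of "star (bv _)"])
  also have "\<dots> = (\<Sum>p\<in>UNIV. \<Sum>d\<in>UNIV. \<Sum>b\<in>UNIV. cnj (T (p,d)) * star (bv p) j * star (bv d) b * mult (bv b) (star z) k)"
    by (simp add: sum_distrib_left mult_ac)
  also have "\<dots> = (\<Sum>b\<in>UNIV. \<Sum>p\<in>UNIV. \<Sum>d\<in>UNIV. cnj (T (p,d)) * star (bv p) j * star (bv d) b * mult (bv b) (star z) k)"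
    by (rule rot3[symmetric])
  also have "\<dots> = tmult mult (tstar star T) (tens one (star z)) (j,k)"
    by (simp add: TR1' tstar_def sum_distrib_right)
  finally show "tstar star (tmult mult (tens one z) T) (j,k) = tmult mult (tstar star T) (tens one (star z)) (j,k)" .
qed

lemma MS1: "map_both S S (tmult mult (tens one z) T) = tmult mult (map_both S S T) (tens one (S z))"
proof (rule ext, clarify)
  fix j k
  have "map_both S S (tmult mult (tens one z) T) (j,k)
     = (\<Sum>p\<in>UNIV. \<Sum>q\<in>UNIV. (\<Sum>d\<in>UNIV. T (p,d) * mult z (bv d) q) * S (bv p) j * S (bv q) k)"
    by (simp only: map_both_def split TL1)
  also have "\<dots> = (\<Sum>p\<in>UNIV. \<Sum>q\<in>UNIV. \<Sum>d\<in>UNIV. T (p,d) * S (bv p) j * (mult z (bv d) q * S (bv q) k))"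
    by (simp add: sum_distrib_left sum_distrib_right mult_ac)
  also have "\<dots> = (\<Sum>p\<in>UNIV. \<Sum>d\<in>UNIV. \<Sum>q\<in>UNIV. T (p,d) * S (bv p) j * (mult z (bv d) q * S (bv q) k))"
    by (rule swap_inner)
  also have "\<dots> = (\<Sum>p\<in>UNIV. \<Sum>d\<in>UNIV. T (p,d) * S (bv p) j * S (mult z (bv d)) k)"
    by (simp only: sum_distrib_left[symmetric] S_exp[of "mult z (bv _)"])
  also have "\<dots> = (\<Sum>p\<in>UNIV. \<Sum>d\<in>UNIV. T (p,d) * S (bv p) j * (\<Sum>b\<in>UNIV. S (bv d) b * mult (bv b) (S z) k))"
    by (simp only: S_mult mult_expL[of "S (bv _)"])
  also have "\<dots> = (\<Sum>p\<in>UNIV. \<Sum>d\<in>UNIV. \<Sum>b\<in>UNIV. T (p,d) * S (bv p) j * S (bv d) b * mult (bv b) (S z) k)"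
    by (simp add: sum_distrib_left mult_ac)
  also have "\<dots> = (\<Sum>b\<in>UNIV. \<Sum>p\<in>UNIV. \<Sum>d\<in>UNIV. T (p,d) * S (bv p) j * S (bv d) b * mult (bv b) (S z) k)"
    by (rule rot3[symmetric])
  also have "\<dots> = tmult mult (map_both S S T) (tens one (S z)) (j,k)"
    by (simp add: TR1' map_both_def sum_distrib_right)
  finally show "map_both S S (tmult mult (tens one z) T) (j,k) = tmult mult (map_both S S T) (tens one (S z)) (j,k)" .
qed

lemma MS2: "map_both S S (tmult mult T (tens one z)) = tmult mult (tens one (S z)) (map_both S S T)"
proof (rule ext, clarify)
  fix j k
  have "map_both S S (tmult mult T (tens one z)) (j,k)
     = (\<Sum>p\<in>UNIV. \<Sum>q\<in>UNIV. (\<Sum>b\<in>UNIV. T (p,b) * mult (bv b) z q) * S (bv p) j * S (bv q) k)"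
    by (simp only: map_both_def split TR1')
  also have "\<dots> = (\<Sum>p\<in>UNIV. \<Sum>q\<in>UNIV. \<Sum>b\<in>UNIV. T (p,b) * S (bv p) j * (mult (bv b) z q * S (bv q) k))"
    by (simp add: sum_distrib_left sum_distrib_right mult_ac)
  also have "\<dots> = (\<Sum>p\<in>UNIV. \<Sum>b\<in>UNIV. \<Sum>q\<in>UNIV. T (p,b) * S (bv p) j * (mult (bv b) z q * S (bv q) k))"
    by (rule swap_inner)
  also have "\<dots> = (\<Sum>p\<in>UNIV. \<Sum>b\<in>UNIV. T (p,b) * S (bv p) j * S (mult (bv b) z) k)"
    by (simp only: sum_distrib_left[symmetric] S_exp[of "mult (bv _) z"])
  also have "\<dots> = (\<Sum>p\<in>UNIV. \<Sum>b\<in>UNIV. T (p,b) * S (bv p) j * (\<Sum>d\<in>UNIV. S (bv b) d * mult (S z) (bv d) k))"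
    by (simp only: S_mult mult_expR[of "S z" "S (bv _)"])
  also have "\<dots> = (\<Sum>p\<in>UNIV. \<Sum>b\<in>UNIV. \<Sum>d\<in>UNIV. T (p,b) * S (bv p) j * S (bv b) d * mult (S z) (bv d) k)"
    by (simp add: sum_distrib_left mult_ac)
  also have "\<dots> = (\<Sum>d\<in>UNIV. \<Sum>p\<in>UNIV. \<Sum>b\<in>UNIV. T (p,b) * S (bv p) j * S (bv b) d * mult (S z) (bv d) k)"
    by (rule rot3[symmetric])
  also have "\<dots> = tmult mult (tens one (S z)) (map_both S S T) (j,k)"
    by (simp add: TL1 map_both_def sum_distrib_right)
  finally show "map_both S S (tmult mult T (tens one z)) (j,k) = tmult mult (tens one (S z)) (map_both S S T) (j,k)" .
qed

lemma FL1: "flip (tmult mult (flip T) (tens one u)) = tmult mult T (tens u one)"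
  by (rule ext, clarify, simp add: flip_def TR1' TR1)

lemma FL2: "flip (tmult mult (tens one u) (flip T)) = tmult mult (tens u one) T"
  by (rule ext, clarify, simp add: flip_def TL1 TL1')

lemma flip_flip[simp]: "flip (flip T) = T"
  by (rule ext, clarify, simp add: flip_def)

lemma Delta_S: "Delta (S z) = flip (map_both S S (Delta z))"
  using S_Delta[of z] by simp

lemma SDe: "map_both S S e = flip e"
  using S_Delta[of one] by simp

lemma H1S: "Delta z = tmult mult (tens one z) e \<Longrightarrow> Delta (S z) = tmult mult e (tens (S z) one)"
  by (simp add: Delta_S MS1 SDe FL1)

lemma H2S: "Delta z = tmult mult e (tens one z) \<Longrightarrow> Delta (S z) = tmult mult (tens (S z) one) e"
  by (simp add: Delta_S MS2 SDe FL2)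

lemma G2: "Delta (zf \<phi>) = tmult mult e (tens one (zf \<phi>))"
proof -
  let ?\<psi> = "\<lambda>d'. cnj (\<Sum>c\<in>UNIV. \<phi> c * star (bv d') c)"
  have "zf \<phi> = star (zf ?\<psi>)" using star_zf[of \<phi>] by (metis star_star)
  hence "Delta (zf \<phi>) = tstar star (Delta (zf ?\<psi>))" by (simp add: Delta_star)
  also have "\<dots> = tmult mult e (tens one (star (zf ?\<psi>)))" by (simp add: G TS)
  also have "\<dots> = tmult mult e (tens one (zf \<phi>))" using \<open>zf \<phi> = star (zf ?\<psi>)\<close> by simp
  finally show ?thesis .
qed


lemma EPS_form: "eps_s mult Delta S x j = (\<Sum>p\<in>UNIV. \<Sum>b\<in>UNIV. Delta x (p,b) * mult (S (bv p)) (bv b) j)"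
proof -
  have "eps_s mult Delta S x j = (\<Sum>a\<in>UNIV. \<Sum>b\<in>UNIV. \<Sum>p\<in>UNIV. Delta x (p,b) * S (bv p) a * mult (bv a) (bv b) j)"
    by (simp add: eps_s_def tmu_def MB_id sum_distrib_right)
  also have "\<dots> = (\<Sum>p\<in>UNIV. \<Sum>b\<in>UNIV. \<Sum>a\<in>UNIV. Delta x (p,b) * S (bv p) a * mult (bv a) (bv b) j)"
    by (rule swap13)
  also have "\<dots> = (\<Sum>p\<in>UNIV. \<Sum>b\<in>UNIV. Delta x (p,b) * mult (S (bv p)) (bv b) j)"
    by (simp only: mult_exp2[of "S (bv _)"] sum_distrib_left mult.assoc)
  finally show ?thesis .
qed

lemma SLIN: "mult (S w) v j = (\<Sum>p\<in>UNIV. w p * mult (S (bv p)) v j)"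
proof -
  have "mult (S w) v j = (\<Sum>a\<in>UNIV. (\<Sum>p\<in>UNIV. w p * S (bv p) a) * mult (bv a) v j)"
    by (simp only: mult_expL[of "S w"] S_exp[of w])
  also have "\<dots> = (\<Sum>p\<in>UNIV. w p * (\<Sum>a\<in>UNIV. S (bv p) a * mult (bv a) v j))"
    by (simp add: sum_distrib_left sum_distrib_right, subst sum.swap, simp add: mult_ac)
  also have "\<dots> = (\<Sum>p\<in>UNIV. w p * mult (S (bv p)) v j)"
    by (simp only: mult_expL[of "S (bv _)"])
  finally show ?thesis .
qed

lemma XSLIN: "mult x (S z) k = (\<Sum>j\<in>UNIV. z j * mult x (S (bv j)) k)"
proof -
  have "mult x (S z) k = (\<Sum>c\<in>UNIV. (\<Sum>j\<in>UNIV. z j * S (bv j) c) * mult x (bv c) k)"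
    by (simp only: mult_expR[of x "S z"] S_exp[of z])
  also have "\<dots> = (\<Sum>j\<in>UNIV. z j * (\<Sum>c\<in>UNIV. S (bv j) c * mult x (bv c) k))"
    by (simp add: sum_distrib_left sum_distrib_right, subst sum.swap, simp add: mult_ac)
  also have "\<dots> = (\<Sum>j\<in>UNIV. z j * mult x (S (bv j)) k)"
    by (simp only: mult_expR[of x "S (bv _)"])
  finally show ?thesis .
qed

lemma EPSL: "eps (mult w v) = (\<Sum>r\<in>UNIV. w r * eps (mult (bv r) v))"
proof -
  have "eps (mult w v) = (\<Sum>k\<in>UNIV. (\<Sum>r\<in>UNIV. w r * mult (bv r) v k) * eps (bv k))"
    by (simp only: eps_exp[of "mult w v"] mult_expL[of w])
  also have "\<dots> = (\<Sum>r\<in>UNIV. w r * (\<Sum>k\<in>UNIV. mult (bv r) v k * eps (bv k)))"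
    by (simp add: sum_distrib_left sum_distrib_right, subst sum.swap, simp add: mult_ac)
  also have "\<dots> = (\<Sum>r\<in>UNIV. w r * eps (mult (bv r) v))"
    by (simp only: eps_exp[of "mult (bv _) v"])
  finally show ?thesis .
qed

lemma EPSR: "eps (mult v w) = (\<Sum>r\<in>UNIV. w r * eps (mult v (bv r)))"
proof -
  have "eps (mult v w) = (\<Sum>k\<in>UNIV. (\<Sum>r\<in>UNIV. w r * mult v (bv r) k) * eps (bv k))"
    by (simp only: eps_exp[of "mult v w"] mult_expR[of v w])
  also have "\<dots> = (\<Sum>r\<in>UNIV. w r * (\<Sum>k\<in>UNIV. mult v (bv r) k * eps (bv k)))"
    by (simp add: sum_distrib_left sum_distrib_right, subst sum.swap, simp add: mult_ac)
  also have "\<dots> = (\<Sum>r\<in>UNIV. w r * eps (mult v (bv r)))"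
    by (simp only: eps_exp[of "mult v (bv _)"])
  finally show ?thesis .
qed

lemma eps_s_H1: assumes "Delta y = tmult mult e (tens y one)" shows "eps_s mult Delta S y = S y"
proof
  fix j
  have "eps_s mult Delta S y j = (\<Sum>p\<in>UNIV. \<Sum>b\<in>UNIV. (\<Sum>c\<in>UNIV. e (c,b) * mult (bv c) y p) * mult (S (bv p)) (bv b) j)"
    by (simp only: EPS_form assms TR1)
  also have "\<dots> = (\<Sum>p\<in>UNIV. \<Sum>b\<in>UNIV. \<Sum>c\<in>UNIV. e (c,b) * (mult (bv c) y p * mult (S (bv p)) (bv b) j))"
    by (simp add: sum_distrib_left sum_distrib_right mult_ac)
  also have "\<dots> = (\<Sum>b\<in>UNIV. \<Sum>c\<in>UNIV. \<Sum>p\<in>UNIV. e (c,b) * (mult (bv c) y p * mult (S (bv p)) (bv b) j))"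
    by (rule rot3)
  also have "\<dots> = (\<Sum>b\<in>UNIV. \<Sum>c\<in>UNIV. e (c,b) * mult (S (mult (bv c) y)) (bv b) j)"
    by (simp only: sum_distrib_left[symmetric] SLIN[of "mult (bv _) y"])
  also have "\<dots> = (\<Sum>b\<in>UNIV. \<Sum>c\<in>UNIV. e (c,b) * mult (S y) (mult (S (bv c)) (bv b)) j)"
    by (simp only: S_mult assoc)
  also have "\<dots> = (\<Sum>c\<in>UNIV. \<Sum>b\<in>UNIV. e (c,b) * mult (S y) (mult (S (bv c)) (bv b)) j)"
    by (rule sum.swap)
  also have "\<dots> = (\<Sum>c\<in>UNIV. \<Sum>b\<in>UNIV. e (c,b) * (\<Sum>i\<in>UNIV. mult (S (bv c)) (bv b) i * mult (S y) (bv i) j))"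
    by (simp only: mult_expR[of "S y" "mult (S (bv _)) (bv _)"])
  also have "\<dots> = (\<Sum>c\<in>UNIV. \<Sum>b\<in>UNIV. \<Sum>i\<in>UNIV. e (c,b) * mult (S (bv c)) (bv b) i * mult (S y) (bv i) j)"
    by (simp add: sum_distrib_left mult_ac)
  also have "\<dots> = (\<Sum>i\<in>UNIV. \<Sum>c\<in>UNIV. \<Sum>b\<in>UNIV. e (c,b) * mult (S (bv c)) (bv b) i * mult (S y) (bv i) j)"
    by (rule rot3[symmetric])
  also have "\<dots> = (\<Sum>i\<in>UNIV. (\<Sum>c\<in>UNIV. \<Sum>b\<in>UNIV. e (c,b) * mult (S (bv c)) (bv b) i) * mult (S y) (bv i) j)"
    by (simp add: sum_distrib_right)
  also have "\<dots> = (\<Sum>i\<in>UNIV. eps_s mult Delta S one i * mult (S y) (bv i) j)"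
    by (simp only: EPS_form)
  also have "\<dots> = mult (S y) one j"
    by (simp only: F4 mult_expR[of "S y" one])
  finally show "eps_s mult Delta S y j = S y j" by simp
qed


definition P :: "('i \<Rightarrow> complex) \<Rightarrow> ('i \<Rightarrow> complex)" where
  "P w = S (eps_s mult Delta S w)"

lemma P_lin: "clinear P"
  using S_lin eps_s_lin unfolding clinear_def P_def by simp

lemma P_in: "P w \<in> target_Cartan mult one Delta"
proof -
  have z: "eps_s mult Delta S w = zf (\<lambda>d. eps (mult w (bv d)))" by (rule ext) (simp add: F3 zf_def)
  show ?thesis unfolding P_def target_Cartan_def z
    using H1S[OF G] H2S[OF G2] by simp
qed

lemma P_id: "y \<in> target_Cartan mult one Delta \<Longrightarrow> P y = y"
  unfolding target_Cartan_def P_def using eps_s_H1 by simp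

lemma TRACE: "(\<Sum>r\<in>UNIV. mult x (P (bv r)) r) = eps x"
proof -
  have "(\<Sum>r\<in>UNIV. mult x (P (bv r)) r) = (\<Sum>r\<in>UNIV. \<Sum>j\<in>UNIV. (\<Sum>d\<in>UNIV. e (j,d) * eps (mult (bv r) (bv d))) * mult x (S (bv j)) r)"
    unfolding P_def by (simp only: XSLIN[of x "eps_s mult Delta S (bv _)"] F3)
  also have "\<dots> = (\<Sum>r\<in>UNIV. \<Sum>j\<in>UNIV. \<Sum>d\<in>UNIV. e (j,d) * (mult x (S (bv j)) r * eps (mult (bv r) (bv d))))"
    by (simp add: sum_distrib_left sum_distrib_right mult_ac)
  also have "\<dots> = (\<Sum>j\<in>UNIV. \<Sum>d\<in>UNIV. \<Sum>r\<in>UNIV. e (j,d) * (mult x (S (bv j)) r * eps (mult (bv r) (bv d))))"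
    by (rule rot3)
  also have "\<dots> = (\<Sum>j\<in>UNIV. \<Sum>d\<in>UNIV. e (j,d) * eps (mult (mult x (S (bv j))) (bv d)))"
    by (simp only: sum_distrib_left[symmetric] EPSL[of "mult x (S (bv _))"])
  also have "\<dots> = (\<Sum>j\<in>UNIV. \<Sum>d\<in>UNIV. e (j,d) * (\<Sum>i\<in>UNIV. mult (S (bv j)) (bv d) i * eps (mult x (bv i))))"
    by (simp only: assoc EPSR[of x "mult (S (bv _)) (bv _)"])
  also have "\<dots> = (\<Sum>j\<in>UNIV. \<Sum>d\<in>UNIV. \<Sum>i\<in>UNIV. e (j,d) * mult (S (bv j)) (bv d) i * eps (mult x (bv i)))"
    by (simp add: sum_distrib_left mult_ac)
  also have "\<dots> = (\<Sum>i\<in>UNIV. \<Sum>j\<in>UNIV. \<Sum>d\<in>UNIV. e (j,d) * mult (S (bv j)) (bv d) i * eps (mult x (bv i)))"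
    by (rule rot3[symmetric])
  also have "\<dots> = (\<Sum>i\<in>UNIV. (\<Sum>j\<in>UNIV. \<Sum>d\<in>UNIV. e (j,d) * mult (S (bv j)) (bv d) i) * eps (mult x (bv i)))"
    by (simp add: sum_distrib_right)
  also have "\<dots> = (\<Sum>i\<in>UNIV. eps_s mult Delta S one i * eps (mult x (bv i)))"
    by (simp only: EPS_form)
  also have "\<dots> = eps (mult x one)"
    by (simp only: F4 EPSR[of x one])
  finally show ?thesis by simp
qed


lemma tm_lin1: "clinear (\<lambda>T. tmult mult T U)"
  unfolding clinear_def
proof (intro conjI allI)
  fix T T'
  show "tmult mult (vadd T T') U = vadd (tmult mult T U) (tmult mult T' U)"
    by (rule ext, clarify, simp only: tmult_def vadd_def split distrib_right sum.distrib)
next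
  fix c T
  show "tmult mult (vscale c T) U = vscale c (tmult mult T U)"
    by (rule ext, clarify, simp only: tmult_def vscale_def split mult.assoc sum_distrib_left)
qed

lemma tm_lin2: "clinear (\<lambda>U. tmult mult T U)"
  unfolding clinear_def
proof (intro conjI allI)
  fix U U'
  show "tmult mult T (vadd U U') = vadd (tmult mult T U) (tmult mult T U')"
    by (rule ext, clarify, simp only: tmult_def vadd_def split distrib_right distrib_left sum.distrib)
next
  fix c U
  show "tmult mult T (vscale c U) = vscale c (tmult mult T U)"
    by (rule ext, clarify, simp only: tmult_def vscale_def split sum_distrib_left, simp only: mult_ac)
qed

lemma tmult_tens: "tmult mult (tens x y) (tens x' y') = tens (mult x x') (mult y y')"
proof (rule ext, clarify)
  fix j k
  have "tmult mult (tens x y) (tens x' y') (j,k) = (\<Sum>c\<in>UNIV. \<Sum>d\<in>UNIV. (x' c * mult x (bv c) j) * (y' d * mult y (bv d) k))"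
    by (simp only: TL, simp add: tens_def mult_ac)
  also have "\<dots> = (\<Sum>c\<in>UNIV. x' c * mult x (bv c) j) * (\<Sum>d\<in>UNIV. y' d * mult y (bv d) k)"
    by (simp add: sum_product)
  also have "\<dots> = tens (mult x x') (mult y y') (j,k)"
    by (simp add: tens_def mult_expR[of x x'] mult_expR[of y y'])
  finally show "tmult mult (tens x y) (tens x' y') (j,k) = tens (mult x x') (mult y y') (j,k)" .
qed

lemma tm_assoc: "tmult mult (tmult mult T U) V = tmult mult T (tmult mult U V)"
proof -
  have base: "tmult mult (tmult mult (bv p) (bv q)) (bv r) = tmult mult (bv p) (tmult mult (bv q) (bv r))" for p q r
    by (cases p, cases q, cases r) (simp add: bv_pair tmult_tens assoc)
  have s2: "tmult mult (tmult mult (bv p) (bv q)) V = tmult mult (bv p) (tmult mult (bv q) V)" for p q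
  proof -
    have "(\<lambda>V. tmult mult (tmult mult (bv p) (bv q)) V) V = (\<lambda>V. tmult mult (bv p) (tmult mult (bv q) V)) V"
      by (rule LIN_EXT[OF tm_lin2 clinear_comp[OF tm_lin2 tm_lin2]]) (simp add: base)
    thus ?thesis by simp
  qed
  have s1: "tmult mult (tmult mult (bv p) U) V = tmult mult (bv p) (tmult mult U V)" for p
  proof -
    have "(\<lambda>U. tmult mult (tmult mult (bv p) U) V) U = (\<lambda>U. tmult mult (bv p) (tmult mult U V)) U"
      by (rule LIN_EXT[OF clinear_comp[OF tm_lin2 tm_lin1] clinear_comp[OF tm_lin1 tm_lin2]]) (simp add: s2)
    thus ?thesis by simp
  qed
  have "(\<lambda>T. tmult mult (tmult mult T U) V) T = (\<lambda>T. tmult mult T (tmult mult U V)) T"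
    by (rule LIN_EXT[OF clinear_comp[OF tm_lin1 tm_lin1] tm_lin1]) (simp add: s1)
  thus ?thesis by simp
qed

lemma ee: "tmult mult e e = e"
  using Delta_mult[of one one] by simp

lemma Nt_mult: assumes "x \<in> target_Cartan mult one Delta" "y \<in> target_Cartan mult one Delta"
  shows "mult x y \<in> target_Cartan mult one Delta"
proof -
  let ?X = "tens x one" and ?Y = "tens y one"
  have x1: "Delta x = tmult mult e ?X" and x2: "Delta x = tmult mult ?X e"
    and y1: "Delta y = tmult mult e ?Y" and y2: "Delta y = tmult mult ?Y e"
    using assms unfolding target_Cartan_def by auto
  have XY: "tmult mult ?X ?Y = tens (mult x y) one" by (simp add: tmult_tens)
  have cx: "tmult mult ?X e = tmult mult e ?X" using x1 x2 by simp
  have cy: "tmult mult e ?Y = tmult mult ?Y e" using y1 y2 by simp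
  have "Delta (mult x y) = tmult mult (tmult mult e ?X) (tmult mult e ?Y)" by (simp add: Delta_mult x1 y1)
  also have "\<dots> = tmult mult e (tmult mult (tmult mult ?X e) ?Y)" by (simp only: tm_assoc)
  also have "\<dots> = tmult mult e (tmult mult e (tmult mult ?X ?Y))" by (simp only: cx tm_assoc)
  also have "\<dots> = tmult mult (tmult mult e e) (tmult mult ?X ?Y)" by (simp only: tm_assoc)
  also have "\<dots> = tmult mult e (tens (mult x y) one)" by (simp only: ee XY)
  finally have 1: "Delta (mult x y) = tmult mult e (tens (mult x y) one)" .
  have "Delta (mult x y) = tmult mult (tmult mult ?X e) (tmult mult ?Y e)" by (simp add: Delta_mult x2 y2)
  also have "\<dots> = tmult mult ?X (tmult mult (tmult mult e ?Y) e)" by (simp only: tm_assoc)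
  also have "\<dots> = tmult mult ?X (tmult mult ?Y (tmult mult e e))" by (simp only: cy tm_assoc)
  also have "\<dots> = tmult mult (tens (mult x y) one) e" by (simp only: ee XY[symmetric] tm_assoc)
  finally have 2: "Delta (mult x y) = tmult mult (tens (mult x y) one) e" .
  show ?thesis using 1 2 unfolding target_Cartan_def by simp
qed

end

theorem proposition2p1p10:
  fixes mult :: "('i::finite \<Rightarrow> complex) \<Rightarrow> ('i \<Rightarrow> complex) \<Rightarrow> ('i \<Rightarrow> complex)"
    and one :: "'i \<Rightarrow> complex"
    and star :: "('i \<Rightarrow> complex) \<Rightarrow> ('i \<Rightarrow> complex)"
    and Delta :: "('i \<Rightarrow> complex) \<Rightarrow> ('i \<times> 'i \<Rightarrow> complex)"
    and S :: "('i \<Rightarrow> complex) \<Rightarrow> ('i \<Rightarrow> complex)"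
    and eps :: "('i \<Rightarrow> complex) \<Rightarrow> complex"
  assumes "weak_Kac_algebra mult one star Delta S eps"
    and "x \<in> target_Cartan mult one Delta"
  shows "eps x = op_trace (target_Cartan mult one Delta) (\<lambda>n. mult x n)"
proof -
  interpret W: wka mult one star Delta S eps by unfold_locales (rule assms(1))
  let ?V = "target_Cartan mult one Delta"
  let ?bs = "SOME bs. is_basis_of ?V bs"
  have B: "is_basis_of ?V ?bs"
    by (rule someI_ex[OF basis_exists_proj[OF W.P_lin W.P_in W.P_id]])
  have "op_trace ?V (\<lambda>n. mult x n) = (\<Sum>k<length ?bs. coord ?bs (mult x (?bs ! k)) k)"
    by (simp add: op_trace_def Let_def)
  also have "\<dots> = (\<Sum>r\<in>UNIV. mult x (W.P (basis_vec r)) r)"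
    by (rule frame_trace[OF B W.P_lin W.P_in W.P_id W.mult_lin1 W.Nt_mult[OF assms(2)]])
  also have "\<dots> = eps x" by (rule W.TRACE)
  finally show ?thesis by simp
qed

end
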